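(* Consider the algorithm AOD described in the context, with known horizon $T$, under assumptions (A1)–(A3). Let $\mathbf{u}_1,\ldots,\mathbf{u}_{T+1}\in\Omega$ and $P_T=\sum_{t=1}^T\|\mathbf{u}_{t+1}-\mathbf{u}_t\|_2$. Let $s=\lceil\log_2T\rceil$ and suppose $D2^{i-1}<P_T\le D2^i$ for some $i\in\{1,\ldots,s\}$. Then \[ \sum_{t=1}^T f_t(\mathbf{w}_t)-\sum_{t=1}^T f_t(\mathbf{u}_t)\le\Big(\frac{DG}{2}+\frac{3G}{2}\sqrt{2DP_T}+\sqrt{3c(T)\Big(1+\frac{2P_T}{D}\Big)}\Big)\sqrt{T}, \] where $c(T)=1+\ln T+\ln(1+\log_2 T)+\ln\frac{5+3\ln(1+T)}{2}$.
   Context: Online convex optimization: $\Omega\subseteq\mathbb{R}^d$ convex; in round $t=1,\ldots,T$ the learner plays $\mathbf{w}_t\in\Omega$, then a convex $f_t:\Omega\to\mathbb{R}$ is revealed. Assumptions: (A1) $\|\nabla f_t(\mathbf{w})\|_2\le G$ for all $\mathbf{w}\in\Omega$, $t\in[T]$; (A2) $\mathbf{0}\in\Omega$ and $\max_{\mathbf{w},\mathbf{w}'\in\Omega}\|\mathbf{w}-\mathbf{w}'\|_2\le D$; (A3) $0\le f_t\le1$ on $\Omega$. $\Pi_\Omega$ is Euclidean projection. Dense geometric covering intervals: $\mathcal{D}=\bigcup_{k\ge0,\,2^k\le T}\mathcal{D}_k$, $\mathcal{D}_k=\{[(i-1)2^k+1,\,i2^k]: i=1,2,\ldots\}$. Algorithm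 AOD: for each $I\in\mathcal{D}$ an expert $E_I$ runs online gradient descent $\mathbf{w}_{t+1,I}=\Pi_\Omega[\mathbf{w}_{t,I}-\eta_I\nabla f_t(\mathbf{w}_{t,I})]$, $\eta_I=D/(G\sqrt{|I|})$, over rounds $t\in I$; its initial point is arbitrary if $\min I=1$, and otherwise is the next iterate of the expert of the preceding same-length interval $[\min I-|I|,\min I-1]$ after processing $f_{\min I-1}$. Active experts at round $t$: $\mathcal{A}_t=\{E_I:I\in\mathcal{D},t\in I\}$. Meta-algorithm (AdaNormalHedge): $\Phi(R,C)=\exp([R]_+^2/(3C))$, $[x]_+=\max(0,x)$, $\Phi(0,0)=1$, $w(R,C)=\tfrac12(\Phi(R+1,C+1)-\Phi(R-1,C+1))$, $R_{t-1,I}=\sum_{u=\min I}^{t-1}(f_u(\mathbf{w}_u)-f_u(\mathbf{w}_{u,I}))$, $C_{t-1,I}=\sum_{u=\min I}^{t-1}|f_u(\mathbf{w}_u)-f_u(\mathbf{w}_{u,I})|$, $p_{t,I}=w(R_{t-1,I},C_{t-1,I})/\sum_{E_{I'}\in\mathcal{A}_t}w(R_{t-1,I'},C_{t-1,I'})$, played point $\mathbf{w}_t=\sum_{E_I\in\mathcal{A}_t}p_{t,I}\mathbf{w}_{t,I}$. *)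

theory Defs
  imports "HOL-Analysis.Analysis"
begin

definition proj :: "'a::euclidean_space set \<Rightarrow> 'a \<Rightarrow> 'a" where
  "proj \<Omega> x = closest_point \<Omega> x"

text \<open>Dense geometric covering intervals: interval (k,i) is [(i-1)2^k+1, i 2^k], i \<ge> 1, 2^k \<le> T.\<close>
definition iv_start :: "nat \<Rightarrow> nat \<Rightarrow> nat" where
  "iv_start k i = (i - 1) * 2 ^ k + 1"

definition iv_end :: "nat \<Rightarrow> nat \<Rightarrow> nat" where
  "iv_end k i = i * 2 ^ k"

definition DGC :: "nat \<Rightarrow> (nat \<times> nat) set" where
  "DGC T = {(k, i). 2 ^ k \<le> T \<and> i \<ge> 1}"

definition active :: "nat \<Rightarrow> nat \<Rightarrow> (nat \<times> nat) set" where
  "active T t = {(k, i) \<in> DGC T. iv_start k i \<le> t \<and> t \<le> iv_end k i}"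

definition eta :: "real \<Rightarrow> real \<Rightarrow> nat \<Rightarrow> real" where
  "eta D G k = D / (G * sqrt (2 ^ k))"

text \<open>The expert of the first interval of
  level k starts at the (arbitrary) point init k; every later expert of level k starts
  at the next iterate of the expert of the preceding interval of the same length, and all
  experts of level k use the same step size eta D G k.  Hence, unfolding the definition,
  the expert E_(k,i) plays at round t \<in> (k,i) the t-th iterate of the following
  projected gradient descent sequence (rounds are 1-indexed).\<close>
primrec ogd :: "'a::euclidean_space set \<Rightarrow> real \<Rightarrow> real \<Rightarrow> (nat \<Rightarrow> 'a \<Rightarrow> 'a)
    \<Rightarrow> (nat \<Rightarrow> 'a) \<Rightarrow> nat \<Rightarrow> nat \<Rightarrow> 'a" where
  "ogd \<Omega> D G g init k 0 = init k"
| "ogd \<Omega> D G g init k (Suc n) =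
     (if n = 0 then init k
      else proj \<Omega> (ogd \<Omega> D G g init k n - eta D G k *\<^sub>R g n (ogd \<Omega> D G g init k n)))"

definition expert_pt :: "'a::euclidean_space set \<Rightarrow> real \<Rightarrow> real \<Rightarrow> (nat \<Rightarrow> 'a \<Rightarrow> 'a)
    \<Rightarrow> (nat \<Rightarrow> 'a) \<Rightarrow> nat \<times> nat \<Rightarrow> nat \<Rightarrow> 'a" where
  "expert_pt \<Omega> D G g init I t = ogd \<Omega> D G g init (fst I) t"

definition Phi :: "real \<Rightarrow> real \<Rightarrow> real" where
  "Phi R C = (if R = 0 \<and> C = 0 then 1 else exp ((max 0 R)\<^sup>2 / (3 * C)))"

definition wt :: "real \<Rightarrow> real \<Rightarrow> real" where
  "wt R C = (Phi (R + 1) (C + 1) - Phi (R - 1) (C + 1)) / 2"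

definition aod_step :: "'a::euclidean_space set \<Rightarrow> real \<Rightarrow> real \<Rightarrow> nat
    \<Rightarrow> (nat \<Rightarrow> 'a \<Rightarrow> real) \<Rightarrow> (nat \<Rightarrow> 'a \<Rightarrow> 'a) \<Rightarrow> (nat \<Rightarrow> 'a) \<Rightarrow> (nat \<Rightarrow> 'a) \<Rightarrow> nat \<Rightarrow> 'a" where
  "aod_step \<Omega> D G T f g init w t =
    (let x = expert_pt \<Omega> D G g init;
         R = (\<lambda>I. \<Sum>u = iv_start (fst I) (snd I)..<t. f u (w u) - f u (x I u));
         C = (\<lambda>I. \<Sum>u = iv_start (fst I) (snd I)..<t. \<bar>f u (w u) - f u (x I u)\<bar>);
         W = (\<lambda>I. wt (R I) (C I));
         p = (\<lambda>I. W I / (\<Sum>J\<in>active T t. W J))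
     in \<Sum>I\<in>active T t. p I *\<^sub>R x I t)"

primrec aod_hist :: "'a::euclidean_space set \<Rightarrow> real \<Rightarrow> real \<Rightarrow> nat
    \<Rightarrow> (nat \<Rightarrow> 'a \<Rightarrow> real) \<Rightarrow> (nat \<Rightarrow> 'a \<Rightarrow> 'a) \<Rightarrow> (nat \<Rightarrow> 'a) \<Rightarrow> nat \<Rightarrow> 'a list" where
  "aod_hist \<Omega> D G T f g init 0 = []"
| "aod_hist \<Omega> D G T f g init (Suc n) =
     aod_hist \<Omega> D G T f g init n @
       [aod_step \<Omega> D G T f g init (\<lambda>u. aod_hist \<Omega> D G T f g init n ! (u - 1)) (Suc n)]"

definition aod :: "'a::euclidean_space set \<Rightarrow> real \<Rightarrow> real \<Rightarrow> nat
    \<Rightarrow> (nat \<Rightarrow> 'a \<Rightarrow> real) \<Rightarrow> (nat \<Rightarrow> 'a \<Rightarrow> 'a) \<Rightarrow> (nat \<Rightarrow> 'a) \<Rightarrow> nat \<Rightarrow> 'a" where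
  "aod \<Omega> D G T f g init t = aod_hist \<Omega> D G T f g init t ! (t - 1)"

definition cT :: "nat \<Rightarrow> real" where
  "cT T = 1 + ln (real T) + ln (1 + log 2 (real T)) + ln ((5 + 3 * ln (1 + real T)) / 2)"

end

theory Submission
  imports Defs "HOL-Probability.Hoeffding"
begin
lemma Phi_eq: "Phi R C = exp ((max 0 R)\<^sup>2 / (3*C))"
  by (simp add: Phi_def)

lemma persp:
  fixes x0 x1 y0 y1 s :: real
  assumes "y0 \<ge> 0" "y1 > 0" "y0 = 0 \<Longrightarrow> x0 = 0" "0 \<le> s" "s \<le> 1"
  shows "((1-s)*x0 + s*x1)\<^sup>2/((1-s)*y0+s*y1) \<le> (1-s)*(x0\<^sup>2/y0) + s*(x1\<^sup>2/y1)"
proof (cases "s = 0")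
  case True then show ?thesis by simp
next
  case s: False
  show ?thesis
  proof (cases "y0 = 0")
    case True
    then have "x0 = 0" using assms by auto
    then show ?thesis using True s assms by (simp add: power2_eq_square field_simps)
  next
    case False
    then have y0: "y0 > 0" using assms by auto
    have d: "(1-s)*y0+s*y1 > 0" using assms s y0
      by (smt (verit) mult_nonneg_nonneg mult_pos_pos)
    have "(1-s)*(x0\<^sup>2/y0) + s*(x1\<^sup>2/y1) - ((1-s)*x0 + s*x1)\<^sup>2/((1-s)*y0+s*y1)
        = ((1-s)* s)*((x1*y0-x0*y1)^2)/(y0*y1*((1-s)*y0+s*y1))"
      using y0 assms(2) d by (simp add: field_simps power2_eq_square)
    also have "\<dots> \<ge> 0" using y0 assms d by (intro divide_nonneg_pos) auto
    finally show ?thesis by simp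
  qed
qed

lemma exp_convex2:
  fixes a b s :: real
  assumes "0 \<le> s" "s \<le> 1"
  shows "exp ((1-s)*a + s*b) \<le> (1-s)*exp a + s * exp b"
  using convex_onD[OF exp_convex, of s a b] assms by (simp add: algebra_simps)

lemma hoeff: fixes h :: real assumes "0 \<le> h" shows "(1 + exp h)/2 \<le> exp (h/2 + h\<^sup>2/8)"
proof -
  have "- h * (1/2) + ln (1 + (1/2) * (exp h - 1)) \<le> h\<^sup>2/8"
    using Hoeffdings_lemma_aux[of h "1/2"] assms by simp
  then have a: "ln (1 + (1/2) * (exp h - 1)) \<le> h/2 + h\<^sup>2/8" by linarith
  have eq: "1 + (1/2) * (exp h - 1) = (1 + exp h)/2" by (simp add: field_simps)
  have "ln ((1 + exp h)/2) \<le> h/2 + h\<^sup>2/8" using a unfolding eq .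
  moreover have "(1 + exp h)/2 > 0" by (simp add: add_pos_pos)
  ultimately show ?thesis by (metis exp_le_cancel_iff exp_ln)
qed

lemma exp_small: fixes C :: real assumes "C \<ge> 0" shows "exp (1/(3*(C+1))) \<le> 1 + 4/(9*(C+1))"
proof -
  define x where "x = 1/(3*(C+1))"
  have x0: "0 \<le> x" "x \<le> 1/3" using assms by (auto simp: x_def field_simps)
  have e1: "(4/3)*x = 4/(9*(C+1))" unfolding x_def by simp
  have e2: "x\<^sup>2 \<le> x/3" using x0 by (simp add: power2_eq_square mult_left_mono[of x "1/3" x, simplified])
  have "exp x \<le> 1 + x + x\<^sup>2" using exp_bound[of x] x0 by simp
  then have "exp x \<le> 1 + (4/3)*x" using e2 by linarith
  then show ?thesis using e1 by (simp add: x_def)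
qed

lemma lin_aux: fixes a k :: real shows "a \<le> 1 + 2*k \<Longrightarrow> (a + 1)/2 \<le> 1 + k" by simp

lemma KL:
  fixes R C :: real
  assumes C0: "C \<ge> 0" and RC: "\<bar>R\<bar> \<le> C"
  shows "(Phi (R+1) (C+1) + Phi (R-1) (C+1))/2 \<le> Phi R C + (3/2)/(C+1)"
proof (cases "R < 0")
  case True
  have "Phi (R-1) (C+1) = 1" using True by (simp add: Phi_eq)
  moreover have "Phi R C = 1" using True by (simp add: Phi_eq)
  moreover have "Phi (R+1) (C+1) \<le> exp (1/(3*(C+1)))"
  proof -
    have "(max 0 (R+1))\<^sup>2 \<le> 1" using True RC by (auto simp: max_def power_le_one abs_le_iff)
    then have "(max 0 (R+1))\<^sup>2/(3*(C+1)) \<le> 1/(3*(C+1))" using C0 by (intro divide_right_mono) auto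
    then show ?thesis by (simp add: Phi_eq)
  qed
  moreover have "4/(9*(C+1)) \<le> 3/(C+1)" using C0 by (simp add: field_simps)
  ultimately have "Phi (R+1) (C+1) \<le> 1 + 3/(C+1)" using exp_small[OF C0] by linarith
  moreover have "3/(C+1) = 2*((3/2)/(C+1))" using C0 by (simp add: field_simps)
  ultimately have "Phi (R+1) (C+1) \<le> 1 + 2*((3/2)/(C+1))" by simp
  from lin_aux[OF this] show ?thesis using \<open>Phi (R-1) (C+1) = 1\<close> \<open>Phi R C = 1\<close> by simp
next
  case False
  then have R0: "R \<ge> 0" by simp
  define a where "a = C + 1"
  have a1: "a \<ge> 1" using C0 by (simp add: a_def)
  define Z where "Z = (R\<^sup>2+1)/(3*a) + 2*R\<^sup>2/(9*a\<^sup>2)"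
  define E where "E = R\<^sup>2/(3*C)"
  have PhiRC: "Phi R C = exp E" using R0 by (simp add: Phi_eq E_def)
  have p1: "Phi (R+1) (C+1) \<le> exp ((R-1)\<^sup>2/(3*a)) * exp (4*R/(3*a))"
  proof -
    have "(max 0 (R+1))\<^sup>2 = (R-1)\<^sup>2 + 4*R" using R0 by (simp add: power2_eq_square algebra_simps)
    then have "(max 0 (R+1))\<^sup>2/(3*a) = (R-1)\<^sup>2/(3*a) + 4*R/(3*a)" by (simp add: add_divide_distrib)
    then show ?thesis by (simp add: Phi_eq a_def exp_add)
  qed
  have p2: "Phi (R-1) (C+1) \<le> exp ((R-1)\<^sup>2/(3*a))"
  proof -
    have "(max 0 (R-1))\<^sup>2 \<le> (R-1)\<^sup>2" by (auto simp: max_def)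
    then have "(max 0 (R-1))\<^sup>2/(3*a) \<le> (R-1)\<^sup>2/(3*a)" using a1 by (intro divide_right_mono) auto
    then show ?thesis by (simp add: Phi_eq a_def)
  qed
  have "(Phi (R+1) (C+1) + Phi (R-1) (C+1))/2 \<le> exp ((R-1)\<^sup>2/(3*a)) * ((1 + exp (4*R/(3*a)))/2)"
    using p1 p2 by (simp add: field_simps)
  also have "\<dots> \<le> exp ((R-1)\<^sup>2/(3*a)) * exp ((4*R/(3*a))/2 + (4*R/(3*a))\<^sup>2/8)"
    using hoeff[of "4*R/(3*a)"] R0 a1 by (intro mult_left_mono) auto
  also have "\<dots> = exp Z"
    unfolding Z_def exp_add[symmetric] using a1
    by (intro arg_cong[where f=exp]) (simp add: field_simps power2_eq_square)
  finally have LZ: "(Phi (R+1) (C+1) + Phi (R-1) (C+1))/2 \<le> exp Z" .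
  show ?thesis
  proof (cases "Z \<le> E")
    case True
    then have "exp Z \<le> Phi R C" using PhiRC by simp
    moreover have "0 \<le> (3/2)/(C+1)" using C0 by simp
    ultimately show ?thesis using LZ by linarith
  next
    case ZE: False
    have key: "Z \<le> E + 1/(3*a) \<and> E \<le> 1"
    proof (cases "C = 0")
      case True
      then have "R = 0" using RC by simp
      then show ?thesis using True by (simp add: Z_def E_def)
    next
      case False
      then have Cp: "C > 0" using C0 by simp
      have ap: "a = C + 1" by (simp add: a_def)
      have id1: "9*a\<^sup>2*C*(Z - E) = 3*a*C*(R\<^sup>2+1) + 2*C*R\<^sup>2 - 3*a\<^sup>2*R\<^sup>2"
        unfolding Z_def E_def using Cp a1 by (simp add: field_simps power2_eq_square)
      have id2: "9*a\<^sup>2*C*(Z - E) = 3*a*C - R\<^sup>2*(C+3)"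
      proof -
        have "3*a*C*(R\<^sup>2+1) + 2*C*R\<^sup>2 - 3*a\<^sup>2*R\<^sup>2 = 3*a*C - R\<^sup>2*(C+3)"
          unfolding ap by (simp add: algebra_simps power2_eq_square)
        then show ?thesis using id1 by simp
      qed
      have pos: "9*a\<^sup>2*C > 0" using Cp a1 by simp
      have "9*a\<^sup>2*C*(Z - E) \<le> 9*a\<^sup>2*C*(1/(3*a))"
        using id2 Cp a1 by (simp add: power2_eq_square)
      then have "Z - E \<le> 1/(3*a)" using pos mult_le_cancel_left_pos by blast
      then have z1: "Z \<le> E + 1/(3*a)" by simp
      note id2
      moreover have "Z - E > 0" using ZE by simp
      ultimately have "R\<^sup>2*(C+3) < 3*a*C" using Cp a1
        by (smt (verit, best) mult_pos_pos zero_less_power)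
      then have "R\<^sup>2 < 3*a*C/(C+3)" using Cp by (simp add: field_simps)
      then have "E < a/(C+3)" unfolding E_def using Cp by (simp add: field_simps)
      also have "a/(C+3) \<le> 1" using Cp by (simp add: ap)
      finally show ?thesis using z1 by simp
    qed
    have "exp Z \<le> exp (E + 1/(3*a))" using key by simp
    also have "\<dots> = exp E * exp (1/(3*a))" by (simp add: exp_add)
    also have "\<dots> \<le> exp E * (1 + 4/(9*a))"
      using exp_small[OF C0] by (intro mult_left_mono) (auto simp: a_def)
    also have "\<dots> = exp E + exp E * (4/(9*a))" by (simp add: algebra_simps)
    also have "exp E * (4/(9*a)) \<le> 3 * (4/(9*a))"
    proof -
      have "exp E \<le> exp 1" using key by simp
      also have "\<dots> \<le> 3" by (rule exp_le)
      finally show ?thesis using a1 by (intro mult_right_mono) auto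
    qed
    also have "3 * (4/(9*a)) = (4/3)/(C+1)" using C0 by (simp add: a_def field_simps)
    finally have "exp Z \<le> Phi R C + (4/3)/(C+1)" using PhiRC by simp
    moreover have "(4/3)/(C+1) \<le> (3/2)/(C+1)" using C0 by (intro divide_right_mono) auto
    ultimately show ?thesis using LZ by linarith
  qed
qed

lemma max0_convex:
  fixes a b s :: real assumes "0 \<le> s" "s \<le> 1"
  shows "max 0 ((1-s)*a + s*b) \<le> (1-s)*max 0 a + s*max 0 b"
proof -
  have "(1-s)*a \<le> (1-s)*max 0 a" using assms by (intro mult_left_mono) auto
  moreover have "s*b \<le> s*max 0 b" using assms by (intro mult_left_mono) auto
  moreover have "0 \<le> (1-s)*max 0 a" "0 \<le> s*max 0 b" using assms by auto
  ultimately show ?thesis by linarith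
qed

lemma CL:
  fixes R C s e :: real
  assumes C0: "C \<ge> 0" and CR: "C = 0 \<Longrightarrow> R = 0" and s: "0 \<le> s" "s \<le> 1"
  shows "Phi (R + e* s) (C + s) \<le> (1-s)*Phi R C + s*Phi (R+e) (C+1)"
proof -
  define x0 where "x0 = max 0 R"
  define x1 where "x1 = max 0 (R+e)"
  define m where "m = max 0 (R + e* s)"
  have "R + e* s = (1-s)*R + s*(R+e)" by (simp add: algebra_simps)
  then have m1: "m \<le> (1-s)*x0 + s*x1" unfolding m_def x0_def x1_def
    using max0_convex[OF s] by simp
  have m0: "0 \<le> m" by (simp add: m_def)
  have "m\<^sup>2 \<le> ((1-s)*x0 + s*x1)\<^sup>2" using m0 m1 by (intro power_mono) auto
  then have "m\<^sup>2/(3*(C+s)) \<le> ((1-s)*x0 + s*x1)\<^sup>2/(3*(C+s))"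
    using C0 s by (intro divide_right_mono) auto
  also have "((1-s)*x0 + s*x1)\<^sup>2/(3*(C+s)) \<le> (1-s)*(x0\<^sup>2/(3*C)) + s*(x1\<^sup>2/(3*(C+1)))"
  proof -
    have d: "(1-s)*(3*C) + s*(3*(C+1)) = 3*(C+s)" by (simp add: algebra_simps)
    have "((1-s)*x0 + s*x1)\<^sup>2/((1-s)*(3*C) + s*(3*(C+1))) \<le> (1-s)*(x0\<^sup>2/(3*C)) + s*(x1\<^sup>2/(3*(C+1)))"
      using C0 s CR by (intro persp) (auto simp: x0_def)
    then show ?thesis unfolding d .
  qed
  finally have "exp (m\<^sup>2/(3*(C+s))) \<le> exp ((1-s)*(x0\<^sup>2/(3*C)) + s*(x1\<^sup>2/(3*(C+1))))" by simp
  also have "\<dots> \<le> (1-s)*exp (x0\<^sup>2/(3*C)) + s*exp (x1\<^sup>2/(3*(C+1)))" by (rule exp_convex2[OF s])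
  finally show ?thesis by (simp add: Phi_eq m_def x0_def x1_def)
qed


lemma PL:
  fixes R C r :: real
  assumes C0: "C \<ge> 0" and RC: "\<bar>R\<bar> \<le> C" and r: "\<bar>r\<bar> \<le> 1"
  shows "Phi (R+r) (C+\<bar>r\<bar>) \<le> Phi R C + wt R C * r + (3/2)*\<bar>r\<bar>/(C+1)"
proof -
  have CR: "C = 0 \<Longrightarrow> R = 0" using RC by simp
  have K: "(Phi (R+1) (C+1) + Phi (R-1) (C+1))/2 \<le> Phi R C + (3/2)/(C+1)" by (rule KL[OF C0 RC])
  show ?thesis
  proof (cases "r \<ge> 0")
    case True
    have "Phi (R + 1*r) (C + r) \<le> (1-r)*Phi R C + r*Phi (R+1) (C+1)"
      using CL[OF C0 CR, of r 1] True r by simp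
    also have "\<dots> = Phi R C + r*(Phi (R+1) (C+1) - Phi R C)" by (simp add: algebra_simps)
    also have "Phi (R+1) (C+1) - Phi R C \<le> wt R C + (3/2)/(C+1)"
      using K by (simp add: wt_def field_simps)
    then have "r*(Phi (R+1) (C+1) - Phi R C) \<le> r*(wt R C + (3/2)/(C+1))"
      using True by (intro mult_left_mono) auto
    finally show ?thesis using True by (simp add: algebra_simps)
  next
    case False
    define s where "s = -r"
    have s: "0 \<le> s" "s \<le> 1" using False r by (auto simp: s_def)
    have "Phi (R + (-1)* s) (C + s) \<le> (1-s)*Phi R C + s*Phi (R+(-1)) (C+1)"
      using CL[OF C0 CR s, of "-1"] by simp
    also have "\<dots> = Phi R C + s*(Phi (R-1) (C+1) - Phi R C)" by (simp add: algebra_simps)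
    also have "Phi (R-1) (C+1) - Phi R C \<le> - wt R C + (3/2)/(C+1)"
      using K by (simp add: wt_def field_simps)
    then have "s*(Phi (R-1) (C+1) - Phi R C) \<le> s*(- wt R C + (3/2)/(C+1))"
      using s by (intro mult_left_mono) auto
    finally show ?thesis using False by (simp add: s_def algebra_simps)
  qed
qed

lemma wt_nonneg: "C \<ge> 0 \<Longrightarrow> wt R C \<ge> 0"
  unfolding wt_def Phi_eq
proof -
  assume C: "C \<ge> 0"
  have "(max 0 (R-1))\<^sup>2 \<le> (max 0 (R+1))\<^sup>2" by (intro power_mono) auto
  then have "(max 0 (R-1))\<^sup>2/(3*(C+1)) \<le> (max 0 (R+1))\<^sup>2/(3*(C+1))"
    using C by (intro divide_right_mono) auto
  then show "0 \<le> (exp ((max 0 (R+1))\<^sup>2/(3*(C+1))) - exp ((max 0 (R-1))\<^sup>2/(3*(C+1))))/2" by simp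
qed

lemma Phi_ge1: "C \<ge> 0 \<Longrightarrow> Phi R C \<ge> 1"
  unfolding Phi_eq by simp

lemma harm_step:
  fixes y x :: real assumes y: "y \<ge> 1" and x: "0 \<le> x" "x \<le> 1"
  shows "x/y \<le> ln (y+x) - ln y + 1/y - 1/(y+x)"
proof -
  have yx: "y + x > 0" using y x by simp
  have "ln (y/(y+x)) \<le> y/(y+x) - 1" using y yx by (intro ln_le_minus_one) auto
  also have "y/(y+x) - 1 = - x/(y+x)" using yx by (simp add: field_simps)
  finally have l: "x/(y+x) \<le> ln (y+x) - ln y" using y yx by (simp add: ln_div)
  have "(x-1)/y \<le> (x-1)/(y+x)"
    using y x yx by (intro divide_left_mono_neg) (auto simp: mult_pos_pos)
  then have "x/y - 1/y \<le> x/(y+x) - 1/(y+x)" by (simp add: diff_divide_distrib)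
  then show ?thesis using l by linarith
qed

lemma harm_log:
  fixes x :: "nat \<Rightarrow> real"
  assumes "\<And>u. u \<in> {a..<m} \<Longrightarrow> 0 \<le> x u \<and> x u \<le> 1"
  shows "(\<Sum>u\<in>{a..<m}. x u/(1 + (\<Sum>v\<in>{a..<u}. x v))) \<le> 1 + ln (1 + (\<Sum>u\<in>{a..<m}. x u))"
proof -
  have "(\<Sum>u\<in>{a..<m}. x u/(1 + (\<Sum>v\<in>{a..<u}. x v)))
      \<le> ln (1 + (\<Sum>u\<in>{a..<m}. x u)) + 1 - 1/(1 + (\<Sum>u\<in>{a..<m}. x u))"
    using assms
  proof (induction m)
    case 0 then show ?case by simp
  next
    case (Suc m)
    show ?case
    proof (cases "a \<le> m")
      case False
      then have "{a..<Suc m} = {}" by auto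
      then show ?thesis by simp
    next
      case True
      have ins: "{a..<Suc m} = insert m {a..<m}" using True by auto
      define S where "S = (\<Sum>u\<in>{a..<m}. x u)"
      have S0: "S \<ge> 0" unfolding S_def using Suc.prems by (intro sum_nonneg) auto
      have xm: "0 \<le> x m" "x m \<le> 1" using Suc.prems True by auto
      have IH: "(\<Sum>u\<in>{a..<m}. x u/(1 + (\<Sum>v\<in>{a..<u}. x v))) \<le> ln (1 + S) + 1 - 1/(1+S)"
        using Suc.IH Suc.prems unfolding S_def by auto
      have st: "x m/(1+S) \<le> ln ((1+S) + x m) - ln (1+S) + 1/(1+S) - 1/((1+S) + x m)"
        using harm_step[of "1+S" "x m"] S0 xm by simp
      have "(\<Sum>u\<in>{a..<Suc m}. x u/(1 + (\<Sum>v\<in>{a..<u}. x v)))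
          = x m/(1+S) + (\<Sum>u\<in>{a..<m}. x u/(1 + (\<Sum>v\<in>{a..<u}. x v)))"
        unfolding ins S_def by simp
      also have "\<dots> \<le> ln (1 + (S + x m)) + 1 - 1/(1 + (S + x m))"
        using IH st by (simp add: add.assoc)
      also have "S + x m = (\<Sum>u\<in>{a..<Suc m}. x u)" unfolding ins S_def by simp
      finally show ?thesis .
    qed
  qed
  also have "\<dots> \<le> 1 + ln (1 + (\<Sum>u\<in>{a..<m}. x u))"
  proof -
    have "(\<Sum>u\<in>{a..<m}. x u) \<ge> 0" using assms by (intro sum_nonneg) auto
    then have "1/(1 + (\<Sum>u\<in>{a..<m}. x u)) \<ge> 0" by simp
    then show ?thesis by linarith
  qed
  finally show ?thesis .
qed

lemma sum_sqrt_le: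
  fixes z :: "'b \<Rightarrow> real"
  assumes "finite J" "\<And>j. j \<in> J \<Longrightarrow> z j \<ge> 0"
  shows "(\<Sum>j\<in>J. sqrt (z j)) \<le> sqrt (real (card J) * (\<Sum>j\<in>J. z j))"
proof -
  have "(\<Sum>j\<in>J. 1 * sqrt (z j))\<^sup>2 \<le> (\<Sum>j\<in>J. 1\<^sup>2) * (\<Sum>j\<in>J. (sqrt (z j))\<^sup>2)"
    by (rule Cauchy_Schwarz_ineq_sum)
  also have "(\<Sum>j\<in>J. (sqrt (z j))\<^sup>2) = (\<Sum>j\<in>J. z j)" using assms by (intro sum.cong) auto
  finally have "(\<Sum>j\<in>J. sqrt (z j))\<^sup>2 \<le> real (card J) * (\<Sum>j\<in>J. z j)" by simp
  then show ?thesis by (metis real_le_rsqrt)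
qed

lemma grad_ineq:
  fixes f :: "'a::euclidean_space \<Rightarrow> real"
  assumes cv: "convex \<Omega>" and cf: "convex_on \<Omega> f"
    and d: "(f has_derivative (\<lambda>h. gr \<bullet> h)) (at x within \<Omega>)"
    and x: "x \<in> \<Omega>" and y: "y \<in> \<Omega>"
  shows "f x - f y \<le> gr \<bullet> (x - y)"
proof (cases "y = x")
  case True then show ?thesis by simp
next
  case False
  define \<gamma> where "\<gamma> = (\<lambda>s::real. x + s *\<^sub>R (y - x))"
  have \<gamma>in: "\<gamma> ` {0..1} \<subseteq> \<Omega>"
  proof
    fix z assume "z \<in> \<gamma> ` {0..1}"
    then obtain s where s: "s \<in> {0..1}" "z = x + s *\<^sub>R (y - x)" by (auto simp: \<gamma>_def)
    then have "z = (1 - s) *\<^sub>R x + s *\<^sub>R y" by (simp add: algebra_simps)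
    then show "z \<in> \<Omega>" using cv x y s by (auto intro: convexD_alt)
  qed
  have dg: "(\<gamma> has_derivative (\<lambda>s. s *\<^sub>R (y - x))) (at 0 within {0..1})"
    unfolding \<gamma>_def by (auto intro!: derivative_eq_intros)
  have d0: "(f has_derivative (\<lambda>h. gr \<bullet> h)) (at (\<gamma> 0) within \<gamma> ` {0..1})"
    using has_derivative_subset[OF d \<gamma>in] by (simp add: \<gamma>_def)
  have "((f \<circ> \<gamma>) has_derivative (\<lambda>s. gr \<bullet> (s *\<^sub>R (y - x)))) (at 0 within {0..1})"
    using diff_chain_within[OF dg d0] by (simp add: o_def)
  then have "((f \<circ> \<gamma>) has_real_derivative (gr \<bullet> (y - x))) (at 0 within {0..1})"
  proof -
    have eqf: "(\<lambda>s. gr \<bullet> (s *\<^sub>R (y - x))) = (\<lambda>s. (gr \<bullet> (y - x)) * s)" by (auto simp: fun_eq_iff)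
    show ?thesis using \<open>((f \<circ> \<gamma>) has_derivative _) _\<close> unfolding has_field_derivative_def eqf .
  qed
  then have lim: "((\<lambda>s. ((f \<circ> \<gamma>) s - (f \<circ> \<gamma>) 0) / (s - 0)) \<longlongrightarrow> gr \<bullet> (y - x)) (at 0 within {0..1})"
    by (simp add: has_field_derivative_iff)
  have "{0<..1} \<subseteq> {0..(1::real)}" by auto
  then have lim2: "((\<lambda>s. ((f \<circ> \<gamma>) s - (f \<circ> \<gamma>) 0) / (s - 0)) \<longlongrightarrow> gr \<bullet> (y - x)) (at 0 within {0<..1})"
    using lim tendsto_within_subset by blast
  have nb: "at (0::real) within {0<..1} \<noteq> bot"
    by (simp add: at_within_eq_bot_iff)
  have ev: "eventually (\<lambda>s. ((f \<circ> \<gamma>) s - (f \<circ> \<gamma>) 0) / (s - 0) \<le> f y - f x) (at 0 within {0<..1})"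
    unfolding eventually_at_filter
  proof (intro always_eventually allI impI)
    fix s :: real assume "s \<noteq> 0" and s: "s \<in> {0<..1}"
    have "f ((1 - s) *\<^sub>R x + s *\<^sub>R y) \<le> (1 - s) * f x + s * f y"
      using convex_onD[OF cf] s x y by auto
    moreover have "\<gamma> s = (1 - s) *\<^sub>R x + s *\<^sub>R y" by (simp add: \<gamma>_def algebra_simps)
    ultimately have "(f \<circ> \<gamma>) s - (f \<circ> \<gamma>) 0 \<le> s * (f y - f x)" by (simp add: \<gamma>_def algebra_simps)
    then show "((f \<circ> \<gamma>) s - (f \<circ> \<gamma>) 0) / (s - 0) \<le> f y - f x" using s by (simp add: divide_le_eq mult.commute)
  qed
  have "gr \<bullet> (y - x) \<le> f y - f x"
    by (rule tendsto_upperbound[OF lim2 ev nb])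
  then show ?thesis by (simp add: inner_diff_right)
qed

lemma sq_shift:
  fixes a u u' :: "'a::real_inner"
  assumes "norm (a - u) \<le> D" "norm (a - u') \<le> D"
  shows "(norm (a - u'))\<^sup>2 \<le> (norm (a - u))\<^sup>2 + 2*D*norm (u' - u)"
proof -
  have t: "norm (a - u') \<le> norm (a - u) + norm (u' - u)"
    using norm_triangle_ineq[of "a - u" "u - u'"] by (simp add: norm_minus_commute)
  have "(norm (a - u'))\<^sup>2 - (norm (a - u))\<^sup>2 = (norm (a - u') - norm (a - u)) * (norm (a - u') + norm (a - u))"
    by (simp add: power2_eq_square algebra_simps)
  also have "\<dots> \<le> norm (u' - u) * (2*D)"
  proof (cases "norm (a - u') - norm (a - u) \<ge> 0")
    case True
    then show ?thesis using t assms by (intro mult_mono) auto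
  next
    case False
    then have "(norm (a - u') - norm (a - u)) * (norm (a - u') + norm (a - u)) \<le> 0"
      by (intro mult_nonpos_nonneg) auto
    also have "0 \<le> norm (u' - u) * (2*D)" using assms by (intro mult_nonneg_nonneg) (auto intro: order_trans[OF norm_ge_zero])
    finally show ?thesis .
  qed
  finally show ?thesis by (simp add: algebra_simps)
qed

lemma ogd_regret:
  fixes \<Omega> :: "'a::euclidean_space set" and x u :: "nat \<Rightarrow> 'a" and h :: "nat \<Rightarrow> 'a \<Rightarrow> real"
    and gg :: "nat \<Rightarrow> 'a \<Rightarrow> 'a"
  assumes cv: "convex \<Omega>" and cl: "closed \<Omega>" and eta: "\<eta> > 0"
    and x_in: "\<And>t. x t \<in> \<Omega>" and u_in: "\<And>t. t \<in> {1..T+1} \<Longrightarrow> u t \<in> \<Omega>"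
    and step: "\<And>t. t \<in> {1..T} \<Longrightarrow> x (Suc t) = closest_point \<Omega> (x t - \<eta> *\<^sub>R gg t (x t))"
    and lin: "\<And>t. t \<in> {1..T} \<Longrightarrow> h t (x t) - h t (u t) \<le> gg t (x t) \<bullet> (x t - u t)"
    and gb: "\<And>t. t \<in> {1..T} \<Longrightarrow> norm (gg t (x t)) \<le> G"
    and diam: "\<And>w w'. w \<in> \<Omega> \<Longrightarrow> w' \<in> \<Omega> \<Longrightarrow> norm (w - w') \<le> D"
  shows "(\<Sum>t=1..T. h t (x t) - h t (u t))
     \<le> (D\<^sup>2 + 2*D*(\<Sum>t=1..T. norm (u (t+1) - u t)))/(2*\<eta>) + \<eta>*G\<^sup>2*T/2"
proof -
  have ne: "\<Omega> \<noteq> {}" using x_in by auto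
  define d where "d t = (norm (x t - u t))\<^sup>2" for t
  have stepb: "h t (x t) - h t (u t) \<le> (d t - d (Suc t))/(2*\<eta>) + D/\<eta> * norm (u (t+1) - u t) + \<eta>*G\<^sup>2/2"
    if t: "t \<in> {1..T}" for t
  proof -
    let ?gt = "gg t (x t)"
    have ut: "u t \<in> \<Omega>" "u (Suc t) \<in> \<Omega>" using u_in t by auto
    have "norm (x (Suc t) - u t) \<le> norm ((x t - \<eta> *\<^sub>R ?gt) - u t)"
      using closest_point_lipschitz[OF cv cl ne, of "x t - \<eta> *\<^sub>R ?gt" "u t"] step[OF t]
        closest_point_self[OF ut(1)] by (simp add: dist_norm)
    then have "(norm (x (Suc t) - u t))\<^sup>2 \<le> (norm ((x t - u t) - \<eta> *\<^sub>R ?gt))\<^sup>2"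
      by (simp add: algebra_simps power_mono)
    also have "(norm ((x t - u t) - \<eta> *\<^sub>R ?gt))\<^sup>2 = d t - 2*\<eta>*(?gt \<bullet> (x t - u t)) + \<eta>\<^sup>2*(norm ?gt)\<^sup>2"
      unfolding d_def power2_norm_eq_inner
      by (simp add: inner_diff_left inner_diff_right inner_commute power2_eq_square algebra_simps)
    finally have A: "(norm (x (Suc t) - u t))\<^sup>2 \<le> d t - 2*\<eta>*(?gt \<bullet> (x t - u t)) + \<eta>\<^sup>2*(norm ?gt)\<^sup>2" .
    have B: "d (Suc t) \<le> (norm (x (Suc t) - u t))\<^sup>2 + 2*D*norm (u (Suc t) - u t)"
      unfolding d_def by (rule sq_shift) (use diam x_in ut in auto)
    have C: "(norm ?gt)\<^sup>2 \<le> G\<^sup>2" using gb[OF t] by (intro power_mono) auto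
    have "2*\<eta>*(?gt \<bullet> (x t - u t)) \<le> d t - d (Suc t) + 2*D*norm (u (Suc t) - u t) + \<eta>\<^sup>2*G\<^sup>2"
      using A B mult_left_mono[OF C, of "\<eta>\<^sup>2"] by simp
    then have "?gt \<bullet> (x t - u t) \<le> (d t - d (Suc t) + 2*D*norm (u (Suc t) - u t) + \<eta>\<^sup>2*G\<^sup>2)/(2*\<eta>)"
      using eta by (simp add: field_simps)
    also have "\<dots> = (d t - d (Suc t))/(2*\<eta>) + D/\<eta> * norm (u (t+1) - u t) + \<eta>*G\<^sup>2/2"
      using eta by (simp add: field_simps power2_eq_square)
    finally show ?thesis using lin[OF t] by linarith
  qed
  have "(\<Sum>t=1..T. h t (x t) - h t (u t))
      \<le> (\<Sum>t=1..T. (d t - d (Suc t))/(2*\<eta>) + D/\<eta> * norm (u (t+1) - u t) + \<eta>*G\<^sup>2/2)"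
    using stepb by (rule sum_mono)
  also have "\<dots> = (\<Sum>t=1..T. d t - d (Suc t))/(2*\<eta>) + D/\<eta> * (\<Sum>t=1..T. norm (u (t+1) - u t)) + \<eta>*G\<^sup>2*T/2"
    by (simp add: sum.distrib sum_divide_distrib sum_distrib_left)
  also have "(\<Sum>t=1..T. d t - d (Suc t)) = d 1 - d (Suc T)"
    using sum_Suc_diff[of 1 T "\<lambda>t. - d t"] by simp
  also have "d 1 - d (Suc T) \<le> D\<^sup>2"
  proof -
    have "norm (x 1 - u 1) \<le> D" using diam x_in u_in by auto
    then have "d 1 \<le> D\<^sup>2" unfolding d_def by (intro power_mono) auto
    moreover have "d (Suc T) \<ge> 0" by (simp add: d_def)
    ultimately show ?thesis by linarith
  qed
  finally have "(\<Sum>t=1..T. h t (x t) - h t (u t)) \<le> D\<^sup>2/(2*\<eta>) + D/\<eta> * (\<Sum>t=1..T. norm (u (t+1) - u t)) + \<eta>*G\<^sup>2*T/2"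
    using eta by (simp add: divide_right_mono)
  also have "D\<^sup>2/(2*\<eta>) + D/\<eta> * (\<Sum>t=1..T. norm (u (t+1) - u t)) = (D\<^sup>2 + 2*D*(\<Sum>t=1..T. norm (u (t+1) - u t)))/(2*\<eta>)"
    using eta by (simp add: field_simps)
  finally show ?thesis .
qed

lemma hist_len: "length (aod_hist \<Omega> D G T f g init n) = n"
  by (induction n) auto

lemma hist_nth: "u < n \<Longrightarrow> aod_hist \<Omega> D G T f g init n ! u = aod_hist \<Omega> D G T f g init (Suc u) ! u"
proof (induction n)
  case 0 then show ?case by simp
next
  case (Suc n)
  show ?case
  proof (cases "u < n")
    case True
    then show ?thesis using Suc by (simp add: nth_append hist_len)
  next
    case False
    then have "u = n" using Suc.prems by simp
    then show ?thesis by simp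
  qed
qed

lemma hist_aod: "1 \<le> u \<Longrightarrow> u \<le> n \<Longrightarrow> aod_hist \<Omega> D G T f g init n ! (u - 1) = aod \<Omega> D G T f g init u"
proof -
  assume u: "1 \<le> u" "u \<le> n"
  have "aod_hist \<Omega> D G T f g init n ! (u - 1) = aod_hist \<Omega> D G T f g init (Suc (u - 1)) ! (u - 1)"
    using u by (intro hist_nth) auto
  also have "Suc (u - 1) = u" using u by simp
  finally show ?thesis unfolding aod_def .
qed

lemma iv_start_ge1: "iv_start k i \<ge> 1" by (simp add: iv_start_def)

lemma aod_step_cong:
  assumes "\<And>u. 1 \<le> u \<Longrightarrow> u < t \<Longrightarrow> w1 u = w2 u"
  shows "aod_step \<Omega> D G T f g init w1 t = aod_step \<Omega> D G T f g init w2 t"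
proof -
  have uu: "w1 u = w2 u" if "u \<in> {iv_start (fst I) (snd I)..<t}" for u I
  proof -
    have "1 \<le> u" "u < t" using that iv_start_ge1[of "fst I" "snd I"] by auto
    then show ?thesis using assms by simp
  qed
  have e1: "(\<lambda>I. \<Sum>u = iv_start (fst I) (snd I)..<t. f u (w1 u) - f u (expert_pt \<Omega> D G g init I u))
      = (\<lambda>I. \<Sum>u = iv_start (fst I) (snd I)..<t. f u (w2 u) - f u (expert_pt \<Omega> D G g init I u))"
  proof (intro ext sum.cong refl)
    fix I u assume "u \<in> {iv_start (fst I) (snd I)..<t}"
    then show "f u (w1 u) - f u (expert_pt \<Omega> D G g init I u) = f u (w2 u) - f u (expert_pt \<Omega> D G g init I u)"
      using uu[of u I] by simp
  qed
  have e2: "(\<lambda>I. \<Sum>u = iv_start (fst I) (snd I)..<t. \<bar>f u (w1 u) - f u (expert_pt \<Omega> D G g init I u)\<bar>)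
      = (\<lambda>I. \<Sum>u = iv_start (fst I) (snd I)..<t. \<bar>f u (w2 u) - f u (expert_pt \<Omega> D G g init I u)\<bar>)"
  proof (intro ext sum.cong refl)
    fix I u assume "u \<in> {iv_start (fst I) (snd I)..<t}"
    then show "\<bar>f u (w1 u) - f u (expert_pt \<Omega> D G g init I u)\<bar> = \<bar>f u (w2 u) - f u (expert_pt \<Omega> D G g init I u)\<bar>"
      using uu[of u I] by simp
  qed
  have e1': "\<And>I. (\<Sum>u = iv_start (fst I) (snd I)..<t. f u (w1 u) - f u (expert_pt \<Omega> D G g init I u))
      = (\<Sum>u = iv_start (fst I) (snd I)..<t. f u (w2 u) - f u (expert_pt \<Omega> D G g init I u))"
    using e1 by metis
  have e2': "\<And>I. (\<Sum>u = iv_start (fst I) (snd I)..<t. \<bar>f u (w1 u) - f u (expert_pt \<Omega> D G g init I u)\<bar>)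
      = (\<Sum>u = iv_start (fst I) (snd I)..<t. \<bar>f u (w2 u) - f u (expert_pt \<Omega> D G g init I u)\<bar>)"
    using e2 by metis
  show ?thesis unfolding aod_step_def Let_def by (simp only: e1' e2')
qed

lemma aod_rec: "1 \<le> t \<Longrightarrow> aod \<Omega> D G T f g init t = aod_step \<Omega> D G T f g init (aod \<Omega> D G T f g init) t"
proof -
  assume "1 \<le> t"
  then obtain n where t: "t = Suc n" by (cases t) auto
  have "aod \<Omega> D G T f g init t = aod_step \<Omega> D G T f g init (\<lambda>u. aod_hist \<Omega> D G T f g init n ! (u - 1)) t"
    unfolding aod_def t by (simp add: nth_append hist_len)
  also have "\<dots> = aod_step \<Omega> D G T f g init (aod \<Omega> D G T f g init) t"
  proof (rule aod_step_cong)
    fix u assume "1 \<le> u" "u < t"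
    then show "aod_hist \<Omega> D G T f g init n ! (u - 1) = aod \<Omega> D G T f g init u"
      using hist_aod[of u n] t by simp
  qed
  finally show ?thesis .
qed

lemma active_finite: "finite (active T t)"
proof -
  have "active T t \<subseteq> {0..T} \<times> {0..t}"
  proof
    fix I assume "I \<in> active T t"
    then obtain k j where I: "I = (k, j)" "2^k \<le> T" "j \<ge> 1" "(j - 1) * 2^k + 1 \<le> t"
      by (auto simp: active_def DGC_def iv_start_def)
    have "k < 2^k" by (rule less_exp)
    moreover have "j - 1 \<le> (j - 1) * 2^k" by simp
    ultimately have "k \<le> T" "j \<le> t" using I by linarith+
    then show "I \<in> {0..T} \<times> {0..t}" using I by auto
  qed
  then show ?thesis by (rule finite_subset) auto
qed

locale aodc =
  fixes \<Omega> :: "'a::euclidean_space set" and D G :: real and T :: nat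
    and f :: "nat \<Rightarrow> 'a \<Rightarrow> real" and g :: "nat \<Rightarrow> 'a \<Rightarrow> 'a" and init :: "nat \<Rightarrow> 'a"
  assumes convex_dom: "convex \<Omega>" and closed_dom: "closed \<Omega>"
    and cvx: "\<And>t. t \<in> {1..T} \<Longrightarrow> convex_on \<Omega> (f t)"
    and A2a: "0 \<in> \<Omega>"
    and A3: "\<And>t w. t \<in> {1..T} \<Longrightarrow> w \<in> \<Omega> \<Longrightarrow> 0 \<le> f t w \<and> f t w \<le> 1"
    and init_in: "\<And>k. init k \<in> \<Omega>"
begin

definition wp where "wp t = aod \<Omega> D G T f g init t"
definition xk where "xk k t = ogd \<Omega> D G g init k t"
definition r where "r I t = f t (wp t) - f t (xk (fst I) t)"
definition rng where "rng I t = {u. iv_start (fst I) (snd I) \<le> u \<and> u < t \<and> u \<le> iv_end (fst I) (snd I)}"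
definition RR where "RR I t = (\<Sum>u\<in>rng I t. r I u)"
definition CC where "CC I t = (\<Sum>u\<in>rng I t. \<bar>r I u\<bar>)"
definition SS where "SS = {k. 2^k \<le> T} \<times> {1..T}"
definition Psi where "Psi t = (\<Sum>I\<in>SS. Phi (RR I t) (CC I t))"

lemma ne: "\<Omega> \<noteq> {}" using A2a by auto

lemma xk_in: "xk k t \<in> \<Omega>"
  unfolding xk_def
  by (induction t) (auto simp: init_in proj_def closest_point_in_set[OF closed_dom ne])

lemma xk_step: "1 \<le> t \<Longrightarrow> xk k (Suc t) = closest_point \<Omega> (xk k t - eta D G k *\<^sub>R g t (xk k t))"
  by (simp add: xk_def proj_def)

lemma rng_finite: "finite (rng I t)"
  by (rule finite_subset[of _ "{..<t}"]) (auto simp: rng_def)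

lemma CC_nonneg: "CC I t \<ge> 0" unfolding CC_def by (intro sum_nonneg) auto

lemma RR_CC: "\<bar>RR I t\<bar> \<le> CC I t" unfolding RR_def CC_def by (rule sum_abs)

lemma rng_act: "I \<in> active T t \<Longrightarrow> rng I t = {iv_start (fst I) (snd I)..<t}"
  by (auto simp: rng_def active_def)

lemma SS_finite: "finite SS"
proof -
  have "{k. 2^k \<le> T} \<subseteq> {..T}"
  proof
    fix k assume "k \<in> {k. 2^k \<le> T}"
    then have a: "2^k \<le> T" by simp
    have "k < 2^k" by (rule less_exp)
    then have "k \<le> T" using a by linarith
    then show "k \<in> {..T}" by simp
  qed
  then have "finite {k. 2^k \<le> T}" by (rule finite_subset) auto
  then show ?thesis unfolding SS_def by auto
qed

lemma active_sub: "t \<in> {1..T} \<Longrightarrow> active T t \<subseteq> SS"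
proof
  fix I assume t: "t \<in> {1..T}" and "I \<in> active T t"
  then obtain k j where I: "I = (k, j)" "2^k \<le> T" "j \<ge> 1" "(j - 1) * 2^k + 1 \<le> t"
    by (auto simp: active_def DGC_def iv_start_def)
  have "j - 1 \<le> (j - 1) * 2^k" by simp
  moreover have "t \<le> T" using t by simp
  ultimately have "j \<le> T" using I by linarith
  then show "I \<in> SS" using I by (auto simp: SS_def)
qed

lemma wp_facts:
  assumes t: "t \<in> {1..T}"
  shows "wp t \<in> \<Omega> \<and> (\<Sum>I\<in>active T t. wt (RR I t) (CC I t) * r I t) \<le> 0"
proof -
  define A where "A = active T t"
  define W where "W I = wt (RR I t) (CC I t)" for I
  have fA: "finite A" unfolding A_def by (rule active_finite)
  have W0: "W I \<ge> 0" for I unfolding W_def by (rule wt_nonneg[OF CC_nonneg])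
  have RRe: "(\<Sum>u = iv_start (fst I) (snd I)..<t. f u (aod \<Omega> D G T f g init u) - f u (ogd \<Omega> D G g init (fst I) u)) = RR I t"
    if "I \<in> A" for I
    using that by (simp add: A_def RR_def rng_act r_def wp_def xk_def expert_pt_def)
  have CCe: "(\<Sum>u = iv_start (fst I) (snd I)..<t. \<bar>f u (aod \<Omega> D G T f g init u) - f u (ogd \<Omega> D G g init (fst I) u)\<bar>) = CC I t"
    if "I \<in> A" for I
    using that by (simp add: A_def CC_def rng_act r_def wp_def xk_def expert_pt_def)
  have eqw: "wp t = (\<Sum>I\<in>A. (W I / (\<Sum>J\<in>A. W J)) *\<^sub>R xk (fst I) t)"
  proof -
    have "wp t = aod_step \<Omega> D G T f g init (aod \<Omega> D G T f g init) t"
      unfolding wp_def using t by (intro aod_rec) auto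
    also have "\<dots> = (\<Sum>I\<in>A. (W I / (\<Sum>J\<in>A. W J)) *\<^sub>R xk (fst I) t)"
      unfolding aod_step_def Let_def A_def[symmetric]
      by (simp add: RRe CCe W_def xk_def expert_pt_def cong: sum.cong)
    finally show ?thesis .
  qed
  show ?thesis
  proof (cases "(\<Sum>J\<in>A. W J) = 0")
    case True
    then have Wz: "\<And>I. I \<in> A \<Longrightarrow> W I = 0" using sum_nonneg_eq_0_iff[OF fA] W0 by blast
    have "wp t = 0" unfolding eqw using True by simp
    moreover have "(\<Sum>I\<in>A. W I * r I t) = 0" using Wz by simp
    ultimately show ?thesis using A2a by (simp add: A_def W_def)
  next
    case False
    define SW where "SW = (\<Sum>J\<in>A. W J)"
    have SWp: "SW > 0" using False W0 sum_nonneg[of A W] unfolding SW_def by force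
    define p where "p I = W I / SW" for I
    have p0: "\<And>I. p I \<ge> 0" using W0 SWp by (simp add: p_def)
    have p1: "(\<Sum>I\<in>A. p I) = 1" using SWp by (simp add: p_def SW_def[symmetric] sum_divide_distrib[symmetric])
    have Ane: "A \<noteq> {}" using False by auto
    have eqw': "wp t = (\<Sum>I\<in>A. p I *\<^sub>R xk (fst I) t)" unfolding eqw p_def SW_def ..
    have win: "wp t \<in> \<Omega>" unfolding eqw' by (rule convex_sum[OF fA convex_dom p1]) (auto simp: p0 xk_in)
    have jen: "f t (wp t) \<le> (\<Sum>I\<in>A. p I * f t (xk (fst I) t))"
      unfolding eqw' by (rule convex_on_sum[OF fA Ane cvx[OF t] p1]) (auto simp: p0 xk_in)
    have "(\<Sum>I\<in>A. W I * r I t) = SW * f t (wp t) - (\<Sum>I\<in>A. W I * f t (xk (fst I) t))"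
      by (simp add: r_def right_diff_distrib sum_subtractf sum_distrib_right SW_def)
    also have "(\<Sum>I\<in>A. W I * f t (xk (fst I) t)) = SW * (\<Sum>I\<in>A. p I * f t (xk (fst I) t))"
      using SWp by (simp add: p_def sum_distrib_left)
    finally have "(\<Sum>I\<in>A. W I * r I t) = SW * (f t (wp t) - (\<Sum>I\<in>A. p I * f t (xk (fst I) t)))"
      by (simp add: right_diff_distrib)
    also have "\<dots> \<le> 0" using SWp jen by (intro mult_nonneg_nonpos) auto
    finally show ?thesis using win by (simp add: A_def W_def)
  qed
qed

end

context aodc begin

lemma r_bound: "t \<in> {1..T} \<Longrightarrow> \<bar>r I t\<bar> \<le> 1"
  using A3[of t "wp t"] A3[of t "xk (fst I) t"] wp_facts[of t] xk_in
  unfolding r_def by (auto simp: abs_le_iff)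

lemma phi_step:
  assumes I: "I \<in> SS" and t: "t \<in> {1..T}"
  shows "Phi (RR I (Suc t)) (CC I (Suc t)) \<le> Phi (RR I t) (CC I t)
     + (if I \<in> active T t then wt (RR I t) (CC I t) * r I t + (3/2)*\<bar>r I t\<bar>/(CC I t + 1) else 0)"
proof (cases "I \<in> active T t")
  case True
  then have a: "iv_start (fst I) (snd I) \<le> t" "t \<le> iv_end (fst I) (snd I)" by (auto simp: active_def)
  have ins: "rng I (Suc t) = insert t (rng I t)" "t \<notin> rng I t" using a by (auto simp: rng_def)
  have R: "RR I (Suc t) = RR I t + r I t" unfolding RR_def ins(1) using ins(2) rng_finite by simp
  have C: "CC I (Suc t) = CC I t + \<bar>r I t\<bar>" unfolding CC_def ins(1) using ins(2) rng_finite by simp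
  have "Phi (RR I t + r I t) (CC I t + \<bar>r I t\<bar>) \<le> Phi (RR I t) (CC I t) + wt (RR I t) (CC I t) * r I t + (3/2)*\<bar>r I t\<bar>/(CC I t + 1)"
    by (rule PL[OF CC_nonneg[of I t] RR_CC[of I t] r_bound[OF t, of I]])
  then show ?thesis using True unfolding R C by simp
next
  case False
  obtain k j where kj: "I = (k, j)" "2^k \<le> T" "j \<ge> 1" using I by (auto simp: SS_def)
  then have "t < iv_start k j \<or> t > iv_end k j" using False by (auto simp: active_def DGC_def)
  then have "rng I (Suc t) = rng I t" using kj by (auto simp: rng_def)
  then show ?thesis using False by (simp add: RR_def CC_def)
qed

lemma psi_step:
  assumes t: "t \<in> {1..T}"
  shows "Psi (Suc t) \<le> Psi t + (\<Sum>I\<in>active T t. (3/2)*\<bar>r I t\<bar>/(CC I t + 1))"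
proof -
  let ?h = "\<lambda>I. wt (RR I t) (CC I t) * r I t + (3/2)*\<bar>r I t\<bar>/(CC I t + 1)"
  have "Psi (Suc t) \<le> (\<Sum>I\<in>SS. Phi (RR I t) (CC I t) + (if I \<in> active T t then ?h I else 0))"
    unfolding Psi_def by (intro sum_mono phi_step[OF _ t])
  also have "\<dots> = Psi t + (\<Sum>I\<in>SS. if I \<in> active T t then ?h I else 0)"
    by (simp add: Psi_def sum.distrib)
  also have "(\<Sum>I\<in>SS. if I \<in> active T t then ?h I else 0) = (\<Sum>I\<in>SS \<inter> active T t. ?h I)"
    by (rule sum.inter_restrict[symmetric, OF SS_finite])
  also have "SS \<inter> active T t = active T t" using active_sub[OF t] by auto
  also have "(\<Sum>I\<in>active T t. ?h I) = (\<Sum>I\<in>active T t. wt (RR I t) (CC I t) * r I t)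
      + (\<Sum>I\<in>active T t. (3/2)*\<bar>r I t\<bar>/(CC I t + 1))"
    by (rule sum.distrib)
  finally show ?thesis using wp_facts[OF t] by linarith
qed

lemma psi1: "Psi 1 = card SS"
proof -
  have "rng I 1 = {}" for I using iv_start_ge1[of "fst I" "snd I"] by (auto simp: rng_def)
  then show ?thesis by (simp add: Psi_def RR_def CC_def Phi_def)
qed

lemma psi_T: "Psi (Suc T) \<le> card SS + (\<Sum>t=1..T. \<Sum>I\<in>active T t. (3/2)*\<bar>r I t\<bar>/(CC I t + 1))"
proof -
  have "n \<le> T \<Longrightarrow> Psi (Suc n) \<le> card SS + (\<Sum>t=1..n. \<Sum>I\<in>active T t. (3/2)*\<bar>r I t\<bar>/(CC I t + 1))" for n
  proof (induction n)
    case 0 then show ?case using psi1 by simp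
  next
    case (Suc n)
    have "Psi (Suc (Suc n)) \<le> Psi (Suc n) + (\<Sum>I\<in>active T (Suc n). (3/2)*\<bar>r I (Suc n)\<bar>/(CC I (Suc n) + 1))"
      using Suc.prems by (intro psi_step) auto
    then show ?case using Suc by simp
  qed
  then show ?thesis by simp
qed

lemma per_expert:
  assumes I: "I \<in> SS"
  shows "(\<Sum>t=1..T. if I \<in> active T t then (3/2)*\<bar>r I t\<bar>/(CC I t + 1) else 0) \<le> (3/2)*(1 + ln (1 + real T))"
proof -
  obtain k j where kj: "I = (k, j)" "2^k \<le> T" "j \<ge> 1" using I by (auto simp: SS_def)
  define a where "a = iv_start k j"
  define b where "b = iv_end k j"
  define m where "m = min (Suc T) (Suc b)"
  have a1: "a \<ge> 1" unfolding a_def by (rule iv_start_ge1)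
  have act: "I \<in> active T t \<longleftrightarrow> a \<le> t \<and> t \<le> b" for t
    using kj by (auto simp: active_def DGC_def a_def b_def)
  define y where "y v = \<bar>r I v\<bar>" for v
  have "(\<Sum>t=1..T. if I \<in> active T t then (3/2)*\<bar>r I t\<bar>/(CC I t + 1) else 0)
      = (\<Sum>t\<in>{t\<in>{1..T}. I \<in> active T t}. (3/2)*\<bar>r I t\<bar>/(CC I t + 1))"
    by (rule sum.inter_filter[symmetric]) simp
  also have "{t\<in>{1..T}. I \<in> active T t} = {a..<m}" using a1 by (auto simp: act m_def)
  also have "(\<Sum>t\<in>{a..<m}. (3/2)*\<bar>r I t\<bar>/(CC I t + 1)) = (3/2) * (\<Sum>t\<in>{a..<m}. y t/(1 + (\<Sum>v\<in>{a..<t}. y v)))"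
  proof -
    have eqCC: "CC I t = (\<Sum>v\<in>{a..<t}. y v)" if "t \<in> {a..<m}" for t
    proof -
      have "rng I t = {a..<t}" using that kj by (auto simp: rng_def a_def b_def m_def)
      then show ?thesis by (simp add: CC_def y_def)
    qed
    have "(\<Sum>t\<in>{a..<m}. (3/2)*\<bar>r I t\<bar>/(CC I t + 1)) = (\<Sum>t\<in>{a..<m}. (3/2) * (y t/(1 + (\<Sum>v\<in>{a..<t}. y v))))"
    proof (rule sum.cong[OF refl])
      fix t assume "t \<in> {a..<m}"
      then show "(3/2)*\<bar>r I t\<bar>/(CC I t + 1) = (3/2) * (y t/(1 + (\<Sum>v\<in>{a..<t}. y v)))"
        using eqCC[of t] by (simp add: y_def add.commute)
    qed
    then show ?thesis by (simp add: sum_distrib_left)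
  qed
  also have "\<dots> \<le> (3/2) * (1 + ln (1 + (\<Sum>t\<in>{a..<m}. y t)))"
  proof -
    have "\<And>u. u \<in> {a..<m} \<Longrightarrow> 0 \<le> y u \<and> y u \<le> 1"
      using a1 by (auto simp: y_def m_def intro!: r_bound)
    then show ?thesis by (intro mult_left_mono harm_log) auto
  qed
  also have "\<dots> \<le> (3/2) * (1 + ln (1 + real T))"
  proof -
    have "(\<Sum>t\<in>{a..<m}. y t) \<le> (\<Sum>t\<in>{a..<m}. 1)"
      using a1 by (intro sum_mono) (auto simp: y_def m_def intro!: r_bound)
    also have "\<dots> = real (m - a)" by simp
    also have "\<dots> \<le> real T" using a1 by (simp add: m_def)
    finally have s: "(\<Sum>t\<in>{a..<m}. y t) \<le> real T" .
    have "0 \<le> (\<Sum>t\<in>{a..<m}. y t)" by (intro sum_nonneg) (simp add: y_def)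
    then have "ln (1 + (\<Sum>t\<in>{a..<m}. y t)) \<le> ln (1 + real T)" using s by simp
    then show ?thesis by simp
  qed
  finally show ?thesis .
qed

lemma psi_bound: "Psi (Suc T) \<le> card SS * ((5 + 3*ln (1 + real T))/2)"
proof -
  have "(\<Sum>t=1..T. \<Sum>I\<in>active T t. (3/2)*\<bar>r I t\<bar>/(CC I t + 1))
      = (\<Sum>t=1..T. \<Sum>I\<in>SS. if I \<in> active T t then (3/2)*\<bar>r I t\<bar>/(CC I t + 1) else 0)"
  proof (rule sum.cong[OF refl])
    fix t assume t: "t \<in> {1..T}"
    have "(\<Sum>I\<in>SS. if I \<in> active T t then (3/2)*\<bar>r I t\<bar>/(CC I t + 1) else 0)
        = (\<Sum>I\<in>SS \<inter> active T t. (3/2)*\<bar>r I t\<bar>/(CC I t + 1))"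
      by (rule sum.inter_restrict[symmetric, OF SS_finite])
    also have "SS \<inter> active T t = active T t" using active_sub[OF t] by auto
    finally show "(\<Sum>I\<in>active T t. (3/2)*\<bar>r I t\<bar>/(CC I t + 1))
        = (\<Sum>I\<in>SS. if I \<in> active T t then (3/2)*\<bar>r I t\<bar>/(CC I t + 1) else 0)" by simp
  qed
  also have "\<dots> = (\<Sum>I\<in>SS. \<Sum>t=1..T. if I \<in> active T t then (3/2)*\<bar>r I t\<bar>/(CC I t + 1) else 0)"
    by (rule sum.swap)
  also have "\<dots> \<le> (\<Sum>I\<in>SS. (3/2)*(1 + ln (1 + real T)))"
    by (intro sum_mono per_expert)
  also have "\<dots> = card SS * ((3/2)*(1 + ln (1 + real T)))" by simp
  finally have "Psi (Suc T) \<le> card SS + card SS * ((3/2)*(1 + ln (1 + real T)))"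
    using psi_T by linarith
  also have "\<dots> = card SS * ((5 + 3*ln (1 + real T))/2)" by (simp add: algebra_simps)
  finally show ?thesis .
qed

end

lemma cT_nonneg: "T \<ge> 1 \<Longrightarrow> cT T \<ge> 0"
proof -
  assume T: "T \<ge> 1"
  have "ln (real T) \<ge> 0" using T by simp
  moreover have "log 2 (real T) \<ge> 0" using T by simp
  then have "ln (1 + log 2 (real T)) \<ge> 0" by simp
  moreover have "ln (1 + real T) \<ge> 0" by simp
  then have "ln ((5 + 3 * ln (1 + real T)) / 2) \<ge> 0" by simp
  ultimately show ?thesis unfolding cT_def by linarith
qed

lemma card_pow_le: assumes "T \<ge> 1" shows "real (card {k. 2^k \<le> T}) \<le> 1 + log 2 (real T)"
proof -
  define N where "N = nat \<lfloor>log 2 (real T)\<rfloor>"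
  have sub: "{k. 2^k \<le> T} \<subseteq> {..N}"
  proof
    fix k assume "k \<in> {k. 2^k \<le> T}"
    then have "real k \<le> log 2 (real T)" using le_log2_of_power by auto
    then have "int k \<le> \<lfloor>log 2 (real T)\<rfloor>" by (simp add: le_floor_iff)
    then show "k \<in> {..N}" by (simp add: N_def)
  qed
  have "card {k. 2^k \<le> T} \<le> card {..N}" by (rule card_mono[OF _ sub]) simp
  then have "real (card {k. 2^k \<le> T}) \<le> real N + 1" by simp
  moreover have "real N \<le> log 2 (real T)"
  proof -
    have "log 2 (real T) \<ge> 0" using assms by simp
    then show ?thesis unfolding N_def by linarith
  qed
  ultimately show ?thesis by simp
qed

lemma ln3: fixes a b c :: real shows "0 < a \<Longrightarrow> 0 < b \<Longrightarrow> 0 < c \<Longrightarrow> ln (a*b*c) = ln a + ln b + ln c"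
  by (simp add: ln_mult)

context aodc begin

lemma card_SS: assumes "T \<ge> 1" shows "real (card SS) \<le> real T * (1 + log 2 (real T))"
proof -
  have "card SS = card {k. 2^k \<le> T} * T" by (simp add: SS_def card_cartesian_product)
  then have "real (card SS) = real (card {k. 2^k \<le> T}) * real T" by simp
  also have "\<dots> \<le> (1 + log 2 (real T)) * real T"
    by (intro mult_right_mono card_pow_le[OF assms]) auto
  finally show ?thesis by (simp add: mult.commute)
qed

lemma Phi_nonneg': "Phi R C \<ge> 0" by (simp add: Phi_eq)

lemma RR_bound:
  assumes T: "T \<ge> 1" and k: "2^k \<le> T" and j: "j \<ge> 1"
  shows "RR (k, j) (Suc T) \<le> sqrt (3 * cT T * real (card (rng (k, j) (Suc T))))"
proof (cases "j \<le> T")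
  case False
  have "iv_start k j \<ge> j"
  proof -
    have "j - 1 \<le> (j - 1) * 2^k" by simp
    then show ?thesis unfolding iv_start_def using j by linarith
  qed
  then have "rng (k, j) (Suc T) = {}" using False by (auto simp: rng_def)
  then show ?thesis by (simp add: RR_def)
next
  case True
  define I where "I = (k, j)"
  have I: "I \<in> SS" using True k j by (simp add: SS_def I_def)
  let ?R = "RR I (Suc T)" and ?C = "CC I (Suc T)" and ?n = "real (card (rng I (Suc T)))"
  have c0: "cT T \<ge> 0" using cT_nonneg[OF T] .
  have Cn: "?C \<le> ?n"
  proof -
    have "?C \<le> (\<Sum>u\<in>rng I (Suc T). 1)" unfolding CC_def
    proof (intro sum_mono)
      fix u assume "u \<in> rng I (Suc T)"
      then have "u \<in> {1..T}" using iv_start_ge1[of k j] by (auto simp: rng_def I_def)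
      then show "\<bar>r I u\<bar> \<le> 1" by (rule r_bound)
    qed
    then show ?thesis by simp
  qed
  show ?thesis
  proof (cases "?R > 0")
    case False
    then show ?thesis using c0 unfolding I_def by (smt (verit) mult_nonneg_nonneg of_nat_0_le_iff real_sqrt_ge_zero)
  next
    case True
    have Cp: "?C > 0" using True RR_CC[of I "Suc T"] by linarith
    have "Phi ?R ?C \<le> Psi (Suc T)" unfolding Psi_def
      using I SS_finite by (intro member_le_sum) (auto simp: Phi_nonneg')
    also have "\<dots> \<le> card SS * ((5 + 3*ln (1 + real T))/2)" by (rule psi_bound)
    also have "\<dots> \<le> real T * (1 + log 2 (real T)) * ((5 + 3*ln (1 + real T))/2)"
      by (intro mult_right_mono card_SS[OF T]) (auto intro: add_nonneg_nonneg)
    finally have ph: "exp (?R\<^sup>2/(3 * ?C)) \<le> real T * (1 + log 2 (real T)) * ((5 + 3*ln (1 + real T))/2)"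
      using True by (simp add: Phi_eq)
    have p1: "real T > 0" "1 + log 2 (real T) > 0" "(5 + 3*ln (1 + real T))/2 > 0"
      using T by (auto intro: add_pos_nonneg)
    have "?R\<^sup>2/(3 * ?C) \<le> ln (real T * (1 + log 2 (real T)) * ((5 + 3*ln (1 + real T))/2))"
      using ph p1 by (subst ln_ge_iff) (auto intro: mult_pos_pos)
    also have "\<dots> = ln (real T) + ln (1 + log 2 (real T)) + ln ((5 + 3*ln (1 + real T))/2)"
      by (rule ln3) (use p1 in auto)
    also have "\<dots> \<le> cT T" unfolding cT_def by simp
    finally have "?R\<^sup>2 \<le> 3 * ?C * cT T" using Cp by (simp add: divide_le_eq mult.commute mult.left_commute)
    also have "\<dots> \<le> 3 * ?n * cT T" using Cn c0 by (intro mult_right_mono) auto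
    finally have "?R\<^sup>2 \<le> 3 * cT T * ?n" by (simp add: mult.commute mult.left_commute)
    then have "sqrt (?R\<^sup>2) \<le> sqrt (3 * cT T * ?n)" by (rule real_sqrt_le_mono)
    then show ?thesis using True by (simp add: I_def)
  qed
qed

lemma meta_regret:
  assumes T: "T \<ge> 1" and k: "2^k \<le> T" and n: "T \<le> n * 2^k"
  shows "(\<Sum>t=1..T. f t (wp t) - f t (xk k t)) \<le> sqrt (3 * cT T * real n * real T)"
proof -
  define L :: nat where "L = 2^k"
  have L0: "L > 0" by (simp add: L_def)
  define q where "q t = (t - 1) div L + 1" for t
  have qim: "q ` {1..T} \<subseteq> {1..n}"
  proof
    fix j assume "j \<in> q ` {1..T}"
    then obtain t where t: "t \<in> {1..T}" "j = q t" by auto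
    have "t \<le> n * 2^k" "1 \<le> t" using t n by auto
    then have "t - 1 < n * L" unfolding L_def by linarith
    then have "(t - 1) div L < n" using L0 by (simp add: div_less_iff_less_mult)
    then show "j \<in> {1..n}" using t by (simp add: q_def)
  qed
  have grp: "{t \<in> {1..T}. q t = j} = rng (k, j) (Suc T)" if j: "j \<in> {1..n}" for j
  proof (intro set_eqI iffI)
    fix t assume "t \<in> {t \<in> {1..T}. q t = j}"
    then have t: "1 \<le> t" "t \<le> T" "(t - 1) div L = j - 1" by (auto simp: q_def)
    have "(j - 1) * L \<le> t - 1" using t(3) div_times_less_eq_dividend[of "t - 1" L] by simp
    moreover have "t - 1 < L + (j - 1) * L" using t(3) dividend_less_div_times[OF L0, of "t - 1"] by simp
    ultimately show "t \<in> rng (k, j) (Suc T)" using t j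
      by (auto simp: rng_def iv_start_def iv_end_def L_def[symmetric] algebra_simps)
  next
    fix t assume "t \<in> rng (k, j) (Suc T)"
    then have t: "(j - 1) * L + 1 \<le> t" "t \<le> T" "t \<le> j * L"
      by (auto simp: rng_def iv_start_def iv_end_def L_def)
    have j1: "j \<ge> 1" using j by simp
    have "L * (j - 1) \<le> t - 1" using t by (simp add: mult.commute)
    moreover have "t - 1 < L * Suc (j - 1)" using t j1 L0 by (simp add: mult.commute)
    ultimately have "(t - 1) div L = j - 1" by (rule div_nat_eqI)
    then show "t \<in> {t \<in> {1..T}. q t = j}" using t j1 by (simp add: q_def)
  qed
  have "(\<Sum>t=1..T. f t (wp t) - f t (xk k t)) = (\<Sum>j\<in>{1..n}. \<Sum>t\<in>{t \<in> {1..T}. q t = j}. r (k, j) t)"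
    by (subst sum.group[OF _ _ qim, symmetric]) (auto simp: r_def)
  also have "\<dots> = (\<Sum>j\<in>{1..n}. RR (k, j) (Suc T))"
    using grp by (simp add: RR_def)
  also have "\<dots> \<le> (\<Sum>j\<in>{1..n}. sqrt (3 * cT T * real (card (rng (k, j) (Suc T)))))"
    using T k by (intro sum_mono RR_bound) auto
  also have "\<dots> \<le> sqrt (real (card {1..n}) * (\<Sum>j\<in>{1..n}. 3 * cT T * real (card (rng (k, j) (Suc T)))))"
    using cT_nonneg[OF T] by (intro sum_sqrt_le) auto
  also have "(\<Sum>j\<in>{1..n}. 3 * cT T * real (card (rng (k, j) (Suc T)))) = 3 * cT T * real T"
  proof -
    have "(\<Sum>j\<in>{1..n}. real (card (rng (k, j) (Suc T)))) = (\<Sum>j\<in>{1..n}. \<Sum>t\<in>{t \<in> {1..T}. q t = j}. (1::real))"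
      using grp by simp
    also have "\<dots> = (\<Sum>t\<in>{1..T}. (1::real))" by (rule sum.group[OF _ _ qim]) auto
    finally show ?thesis by (simp add: sum_distrib_left[symmetric])
  qed
  finally show ?thesis by (simp add: mult.commute mult.left_commute)
qed

end

lemma final_arith:
  fixes D G Tr L P n c meta expert :: real
  assumes D: "D > 0" and G: "G \<ge> 0" and Tr: "Tr > 0" and L: "L > 0" and P: "P > 0" and c: "c \<ge> 0"
    and h1: "P * L \<le> 2 * D * Tr" and h2: "D * Tr \<le> 2 * P * L" and h3: "L \<le> Tr"
    and h4: "n \<le> 1 + 2 * P / D" and n0: "n \<ge> 0"
    and me: "meta \<le> sqrt (3 * c * n * Tr)"
    and ex: "expert \<le> D * G * sqrt L / 2 + G * P * sqrt L + D * G * Tr / (2 * sqrt L)"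
  shows "meta + expert \<le> (D * G / 2 + 3 * G / 2 * sqrt (2 * D * P) + sqrt (3 * c * (1 + 2 * P / D))) * sqrt Tr"
proof -
  define X where "X = sqrt (D * P * Tr)"
  have X0: "X \<ge> 0" using D P Tr by (simp add: X_def)
  have a: "sqrt (3 * c * n * Tr) \<le> sqrt (3 * c * (1 + 2 * P / D)) * sqrt Tr"
  proof -
    have "3 * c * n * Tr \<le> 3 * c * (1 + 2 * P / D) * Tr"
      using h4 c Tr by (intro mult_right_mono mult_left_mono) auto
    then show ?thesis by (simp add: real_sqrt_mult[symmetric])
  qed
  have b: "D * G * sqrt L / 2 \<le> D * G * sqrt Tr / 2"
    using D G h3 L by (intro divide_right_mono mult_left_mono) auto
  have cc: "P * sqrt L \<le> sqrt 2 * X"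
  proof -
    have "(P * sqrt L)\<^sup>2 = P * (P * L)" using L by (simp add: power_mult_distrib power2_eq_square[of P])
    also have "\<dots> \<le> P * (2 * D * Tr)" using P h1 by (intro mult_left_mono) auto
    also have "\<dots> = (sqrt 2 * X)\<^sup>2"
    proof -
      have "0 \<le> D * P * Tr" using D P Tr by simp
      then have "X\<^sup>2 = D * P * Tr" unfolding X_def by (rule real_sqrt_pow2)
      then have e: "(sqrt 2 * X)\<^sup>2 = 2 * (D * P * Tr)" by (simp add: power_mult_distrib)
      show ?thesis unfolding e by (simp add: algebra_simps)
    qed
    finally have sq: "(P * sqrt L)\<^sup>2 \<le> (sqrt 2 * X)\<^sup>2" .
    show ?thesis by (rule power2_le_imp_le[OF sq]) (use X0 in simp)
  qed
  have dd: "D * Tr / (2 * sqrt L) \<le> X / sqrt 2"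
  proof -
    have sL: "sqrt L > 0" using L by simp
    have "(D * Tr / (2 * sqrt L))\<^sup>2 = D * Tr * (D * Tr) / (4 * L)"
      using L by (simp add: power_divide power_mult_distrib power2_eq_square)
    also have "\<dots> \<le> D * Tr * (2 * P * L) / (4 * L)"
      using D Tr L h2 by (intro divide_right_mono mult_left_mono) auto
    also have "\<dots> = (X / sqrt 2)\<^sup>2"
    proof -
      have "0 \<le> D * P * Tr" using D P Tr by simp
      then have "X\<^sup>2 = D * P * Tr" unfolding X_def by (rule real_sqrt_pow2)
      then have "(X / sqrt 2)\<^sup>2 = D * P * Tr / 2" by (simp add: power_divide)
      moreover have "D * Tr * (2 * P * L) / (4 * L) = D * P * Tr / 2" using L by (simp add: field_simps)
      ultimately show ?thesis by simp
    qed
    finally have sq: "(D * Tr / (2 * sqrt L))\<^sup>2 \<le> (X / sqrt 2)\<^sup>2" .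
    show ?thesis by (rule power2_le_imp_le[OF sq]) (use X0 in simp)
  qed
  have e: "G * P * sqrt L + D * G * Tr / (2 * sqrt L) \<le> G * (sqrt 2 * X + X / sqrt 2)"
  proof -
    have "G * (P * sqrt L) \<le> G * (sqrt 2 * X)" using cc G by (rule mult_left_mono)
    moreover have "G * (D * Tr / (2 * sqrt L)) \<le> G * (X / sqrt 2)" using dd G by (rule mult_left_mono)
    ultimately show ?thesis by (simp add: algebra_simps)
  qed
  have f: "G * (sqrt 2 * X + X / sqrt 2) = 3 * G / 2 * sqrt (2 * D * P) * sqrt Tr"
  proof -
    have s2: "sqrt 2 * sqrt 2 = (2::real)" by simp
    have "sqrt (2 * D * P) * sqrt Tr = sqrt 2 * X"
      using D P Tr by (simp add: X_def real_sqrt_mult[symmetric] mult.assoc)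
    moreover have z: "sqrt 2 * X + X / sqrt 2 = 3 / 2 * (sqrt 2 * X)"
      using s2 by (simp add: field_simps)
    ultimately have y: "sqrt (2 * D * P) * sqrt Tr = sqrt 2 * X" and z: "sqrt 2 * X + X / sqrt 2 = 3 / 2 * (sqrt 2 * X)"
      by auto
    have "G * (sqrt 2 * X + X / sqrt 2) = 3*G/2 * (sqrt 2 * X)" unfolding z by simp
    also have "\<dots> = 3*G/2 * (sqrt (2 * D * P) * sqrt Tr)" unfolding y ..
    finally show ?thesis by (simp add: mult.assoc)
  qed
  have "meta + expert \<le> sqrt (3 * c * (1 + 2 * P / D)) * sqrt Tr + D * G * sqrt Tr / 2 + 3 * G / 2 * sqrt (2 * D * P) * sqrt Tr"
    using me a ex b e f by linarith
  then show ?thesis by (simp add: algebra_simps)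
qed

theorem lemma5:
  fixes \<Omega> :: "'a::euclidean_space set"
    and f :: "nat \<Rightarrow> 'a \<Rightarrow> real" and g :: "nat \<Rightarrow> 'a \<Rightarrow> 'a"
    and init :: "nat \<Rightarrow> 'a" and u :: "nat \<Rightarrow> 'a"
    and T :: nat and D G :: real and i :: nat
  assumes convex_dom: "convex \<Omega>" and closed_dom: "closed \<Omega>"
    and cvx: "\<And>t. t \<in> {1..T} \<Longrightarrow> convex_on \<Omega> (f t)"
    and grad: "\<And>t w. t \<in> {1..T} \<Longrightarrow> w \<in> \<Omega> \<Longrightarrow>
                  (f t has_derivative (\<lambda>h. g t w \<bullet> h)) (at w within \<Omega>)"
    and A1: "\<And>t w. t \<in> {1..T} \<Longrightarrow> w \<in> \<Omega> \<Longrightarrow> norm (g t w) \<le> G"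
    and A2a: "0 \<in> \<Omega>"
    and A2b: "\<And>w w'. w \<in> \<Omega> \<Longrightarrow> w' \<in> \<Omega> \<Longrightarrow> norm (w - w') \<le> D"
    and A3: "\<And>t w. t \<in> {1..T} \<Longrightarrow> w \<in> \<Omega> \<Longrightarrow> 0 \<le> f t w \<and> f t w \<le> 1"
    and init_in: "\<And>k. init k \<in> \<Omega>"
    and u_in: "\<And>t. t \<in> {1..T+1} \<Longrightarrow> u t \<in> \<Omega>"
    and i_range: "i \<in> {1..nat \<lceil>log 2 (real T)\<rceil>}"
    and P_range: "D * 2 ^ (i - 1) < (\<Sum>t = 1..T. norm (u (t + 1) - u t))"
                 "(\<Sum>t = 1..T. norm (u (t + 1) - u t)) \<le> D * 2 ^ i"
  shows "(\<Sum>t = 1..T. f t (aod \<Omega> D G T f g init t)) - (\<Sum>t = 1..T. f t (u t))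
     \<le> (D * G / 2 + 3 * G / 2 * sqrt (2 * D * (\<Sum>t = 1..T. norm (u (t + 1) - u t)))
        + sqrt (3 * cT T * (1 + 2 * (\<Sum>t = 1..T. norm (u (t + 1) - u t)) / D))) * sqrt (real T)"
proof -
  interpret aodc \<Omega> D G T f g init
    using convex_dom closed_dom cvx A2a A3 init_in by unfold_locales auto
  define P where "P = (\<Sum>t = 1..T. norm (u (t + 1) - u t))"
  define s where "s = nat \<lceil>log 2 (real T)\<rceil>"
  have i1: "1 \<le> i" "i \<le> s" using i_range by (auto simp: s_def)
  have Tpos: "T > 0"
  proof (rule ccontr)
    assume "\<not> T > 0" then have "T = 0" by simp
    then have "s = 0" by (simp add: s_def log_def)
    then show False using i1 by simp
  qed
  have lT: "log 2 (real T) > 0"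
  proof (rule ccontr)
    assume "\<not> log 2 (real T) > 0"
    then have "\<lceil>log 2 (real T)\<rceil> \<le> 0" by (simp add: ceiling_le_zero)
    then have "s = 0" by (simp add: s_def)
    then show False using i1 by simp
  qed
  have T2: "T \<ge> 2"
  proof -
    have "log 2 (real T) > log 2 1" using lT by simp
    then have "real T > 1" using Tpos by (subst (asm) log_less_cancel_iff) auto
    then show ?thesis by simp
  qed
  have T1: "T \<ge> 1" using T2 by simp
  have Ts: "real T \<le> 2^s"
  proof -
    have "log 2 (real T) \<le> real s" unfolding s_def using lT by linarith
    also have "real s = log 2 (2^s)" by simp
    finally show ?thesis using Tpos by (subst (asm) log_le_cancel_iff) auto
  qed
  have Ts2: "2^(s-1) < real T"
  proof -
    have "real (s - 1) < log 2 (real T)"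
    proof -
      have "real s < log 2 (real T) + 1" unfolding s_def using lT by linarith
      then show ?thesis using i1 by (simp add: of_nat_diff)
    qed
    then have "log 2 (2^(s-1)) < log 2 (real T)" by simp
    then show ?thesis using Tpos by (subst (asm) log_less_cancel_iff) auto
  qed
  define k where "k = s - i"
  define L :: real where "L = 2^k"
  have ks: "k \<le> s - 1" using i1 by (simp add: k_def)
  have LT: "L < real T"
  proof -
    have "L \<le> 2^(s-1)" unfolding L_def using ks by (intro power_increasing) auto
    then show ?thesis using Ts2 by linarith
  qed
  have hk: "2^k \<le> T"
  proof -
    have "real (2^k) < real T" using LT by (simp add: L_def)
    then show ?thesis by linarith
  qed
  have sik: "(2::real)^i * 2^k = 2^s" using i1 by (simp add: k_def power_add[symmetric])
  have nL: "T \<le> 2^i * 2^k"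
  proof -
    have "real T \<le> real (2^i * 2^k)" using Ts sik by simp
    then show ?thesis by linarith
  qed
  have P1: "D * 2^(i-1) < P" "P \<le> D * 2^i" using P_range by (auto simp: P_def)
  have i2: "(2::real)^i = 2 * 2^(i-1)" using i1 by (simp add: power_Suc[symmetric])
  have Dpos: "D > 0"
  proof (rule ccontr)
    assume "\<not> D > 0"
    then have "D * 2^i \<le> D * 2^(i-1)" using i2 by (simp add: mult_le_cancel_left)
    then show False using P1 by linarith
  qed
  have Ppos: "P > 0" using P1 Dpos by (smt (verit) mult_pos_pos zero_less_power)
  have G0: "G \<ge> 0" using A1[of 1 0] A2a T1 by (auto intro: order_trans[OF norm_ge_zero])
  have meta: "(\<Sum>t=1..T. f t (wp t) - f t (xk k t)) \<le> sqrt (3 * cT T * real (2^i) * real T)"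
    by (rule meta_regret[OF T1 hk nL])
  have lin: "f t (xk k t) - f t (u t) \<le> g t (xk k t) \<bullet> (xk k t - u t)" if t: "t \<in> {1..T}" for t
    by (rule grad_ineq[OF convex_dom cvx[OF t] grad[OF t xk_in] xk_in u_in]) (use t in auto)
  have expert: "(\<Sum>t=1..T. f t (xk k t) - f t (u t)) \<le> D * G * sqrt L / 2 + G * P * sqrt L + D * G * real T / (2 * sqrt L)"
  proof (cases "G = 0")
    case True
    have "(\<Sum>t=1..T. f t (xk k t) - f t (u t)) \<le> (\<Sum>t=1..T. (0::real))"
    proof (rule sum_mono)
      fix t assume t: "t \<in> {1..T}"
      have "norm (g t (xk k t)) \<le> 0" using A1[OF t xk_in] True by simp
      then have "g t (xk k t) = 0" by simp
      then show "f t (xk k t) - f t (u t) \<le> 0" using lin[OF t] by simp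
    qed
    then show ?thesis using True by simp
  next
    case False
    then have Gp: "G > 0" using G0 by simp
    have L0: "L > 0" by (simp add: L_def)
    define \<eta> where "\<eta> = eta D G k"
    have eta_eq: "\<eta> = D / (G * sqrt L)" by (simp add: \<eta>_def eta_def L_def)
    have etap: "\<eta> > 0" using Dpos Gp L0 by (simp add: eta_eq)
    have "(\<Sum>t=1..T. f t (xk k t) - f t (u t)) \<le> (D\<^sup>2 + 2*D*P)/(2*\<eta>) + \<eta>*G\<^sup>2*T/2"
      unfolding P_def
    proof (rule ogd_regret[OF convex_dom closed_dom etap xk_in u_in])
      fix t assume t: "t \<in> {1..T}"
      show "xk k (Suc t) = closest_point \<Omega> (xk k t - \<eta> *\<^sub>R g t (xk k t))"
        using t by (simp add: xk_step \<eta>_def)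
      show "f t (xk k t) - f t (u t) \<le> g t (xk k t) \<bullet> (xk k t - u t)" by (rule lin[OF t])
      show "norm (g t (xk k t)) \<le> G" by (rule A1[OF t xk_in])
    next
      fix w w' assume "w \<in> \<Omega>" "w' \<in> \<Omega>"
      then show "norm (w - w') \<le> D" by (rule A2b)
    qed auto
    also have "(D\<^sup>2 + 2*D*P)/(2*\<eta>) + \<eta>*G\<^sup>2*T/2 = D * G * sqrt L / 2 + G * P * sqrt L + D * G * real T / (2 * sqrt L)"
      using Dpos Gp L0 unfolding eta_eq by (simp add: field_simps power2_eq_square)
    finally show ?thesis .
  qed
  have split: "(\<Sum>t = 1..T. f t (aod \<Omega> D G T f g init t)) - (\<Sum>t = 1..T. f t (u t))
      = (\<Sum>t=1..T. f t (wp t) - f t (xk k t)) + (\<Sum>t=1..T. f t (xk k t) - f t (u t))"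
    by (simp add: sum_subtractf wp_def)
  have h1: "P * L \<le> 2 * D * real T"
  proof -
    have "P * L \<le> D * 2^i * L" using P1 by (intro mult_right_mono) (auto simp: L_def)
    also have "\<dots> = D * 2^s" using sik by (simp add: L_def mult.assoc)
    also have "(2::real)^s = 2 * 2^(s-1)" using i1 by (simp add: power_Suc[symmetric])
    finally have "P * L \<le> D * (2 * 2^(s-1))" .
    also have "\<dots> \<le> D * (2 * real T)" using Ts2 Dpos by (intro mult_left_mono) auto
    finally show ?thesis by simp
  qed
  have h2: "D * real T \<le> 2 * P * L"
  proof -
    have "D * real T \<le> D * 2^s" using Ts Dpos by simp
    also have "\<dots> = D * 2^(i-1) * (2 * L)" using sik i2 by (simp add: L_def mult.commute mult.left_commute)
    also have "\<dots> \<le> P * (2 * L)" using P1 by (intro mult_right_mono) (auto simp: L_def)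
    finally show ?thesis by simp
  qed
  have h4: "real (2^i) \<le> 1 + 2 * P / D"
  proof -
    have "(2::real)^i < 2 * P / D" using i2 P1 Dpos by (simp add: field_simps)
    then show ?thesis by simp
  qed
  have "(\<Sum>t = 1..T. f t (aod \<Omega> D G T f g init t)) - (\<Sum>t = 1..T. f t (u t))
      \<le> (D * G / 2 + 3 * G / 2 * sqrt (2 * D * P) + sqrt (3 * cT T * (1 + 2 * P / D))) * sqrt (real T)"
    unfolding split
    by (rule final_arith[OF Dpos G0 _ _ Ppos cT_nonneg[OF T1] h1 h2 _ h4 _ meta expert])
      (use Tpos LT in \<open>auto simp: L_def\<close>)
  then show ?thesis by (simp add: P_def)
qed

end
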